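(* Consider any sequences $\{(x_k,y_k,\gamma_k)\}_{k\ge0}$, $\{(\tilde x_k,u_k,\tilde\gamma_k)\}_{k\ge1}$ generated by the inexact symmetric proximal ADMM described in the context, and let $z_k=(x_k,y_k,\gamma_k)$ ($k\ge0$), $\tilde z_k=(\tilde x_k,y_k,\tilde\gamma_k)$ and $q_k=-\beta(A\tilde x_k+By_k-b)$ ($k\ge1$). Let $\sigma\in[\hat\sigma,1)$ be a scalar with $\varphi(\sigma)\ge0$, $\widehat\varphi(\sigma)\ge0$, $\widetilde\varphi(\sigma)>0$, $\overline\varphi(\sigma)\ge0$ (such $\sigma$ exists). Define $$\eta_0=\frac{4(1+\tau+\vartheta)\varphi(\sigma)}{(\tau+\theta)(1+\tau)\vartheta}d_0,\qquad \eta_k=\frac{\widetilde\varphi(\sigma)}{(\tau+\theta)\beta}\|q_k\|^2+\frac{\varphi(\sigma)}{(\tau+\theta)(1+\tau)}\|y_k-y_{k-1}\|_H^2\quad(k\ge1).$$ Then for every $k\ge1$, $$\|\tilde z_k-z_k\|_M^2+\eta_k\le\sigma\|\tilde z_k-z_{k-1}\|_M^2+\eta_{k-1}.$$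
   Context: Let $f:\mathbb{R}^n\to(-\infty,\infty]$ and $g:\mathbb{R}^p\to(-\infty,\infty]$ be proper closed convex functions, $A\in\mathbb{R}^{m\times n}$, $B\in\mathbb{R}^{m\times p}$, $b\in\mathbb{R}^m$ (problem: $\min\{f(x)+g(y):Ax+By=b\}$). Standing assumption: there exists $(x^*,y^*,\gamma^* )$ solving the Lagrangian system $0\in\partial f(x)-A^*\gamma$, $0\in\partial g(y)-B^*\gamma$, $0=Ax+By-b$. Here $\partial$ is the subdifferential, $A^*$ the transpose, $\mathbb{S}^n_{++}$ ($\mathbb{S}^p_+$) the symmetric positive definite (semidefinite) matrices, and $\|z\|_Q=\sqrt{\langle Qz,z\rangle}$ for $Q$ positive semidefinite. Algorithm (inexact symmetric proximal ADMM): given $(x_0,y_0,\gamma_0)\in\mathbb{R}^n\times\mathbb{R}^p\times\mathbb{R}^m$, $\beta>0$, $\tilde\sigma,\hat\sigma\in[0,1)$, $G\in\mathbb{S}^n_{++}$, $H\in\mathbb{S}^p_+$, and $(\tau,\theta)\in\mathcal R_{\tilde\sigma}:=\{(\tau,\theta):\tau\in(-1,1-\tilde\sigma),\ \tau+\theta>0,\ (1-\tau^2)(2-\tau-\theta-\tilde\sigma)-(1-\theta)^2(1-\tau-\tilde\sigma)>0\}$. For $k=1,2,\dots$: compute $(\tilde x_k,u_k)$ with $u_k\in\partial f(\tilde x_k)-A^*\tilde\gamma_k$ and $\|\tilde x_k-x_{k-1}+G^{-1}u_k\|_G^2\le\frac{\tilde\sigma}{\beta}\|\tilde\gamma_k-\gamma_{k-1}\|^2+\hat\sigma\|\tilde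 x_k-x_{k-1}\|_G^2$, where $\tilde\gamma_k=\gamma_{k-1}-\beta(A\tilde x_k+By_{k-1}-b)$; set $\gamma_{k-1/2}=\gamma_{k-1}-\tau\beta(A\tilde x_k+By_{k-1}-b)$; let $y_k$ be an optimal solution of $\min_y\{g(y)-\langle\gamma_{k-1/2},By\rangle+\frac\beta2\|A\tilde x_k+By-b\|^2+\frac12\|y-y_{k-1}\|_H^2\}$; set $x_k=x_{k-1}-G^{-1}u_k$ and $\gamma_k=\gamma_{k-1/2}-\theta\beta(A\tilde x_k+By_k-b)$. Definitions: $T(x,y,\gamma)=(\partial f(x)-A^*\gamma,\ \partial g(y)-B^*\gamma,\ Ax+By-b)$; $M=\begin{bmatrix}G&0&0\\0&H+\frac{(\tau-\tau\theta+\theta)\beta}{\tau+\theta}B^*B&-\frac{\tau}{\tau+\theta}B^*\\0&-\frac{\tau}{\tau+\theta}B&\frac{1}{(\tau+\theta)\beta}I\end{bmatrix}$; $d_0=\inf\{\|z^*-z_0\|_M^2: z^*\in T^{-1}(0)\}$; $\vartheta=\sqrt{(3-3\tau-2\tilde\sigma)(4-\tau-\theta-2\tilde\sigma)}-2(1-\tau-\tilde\sigma)$; and for $\sigma\in\mathbb{R}$: $\varphi(\sigma)=(1-\tau)(\sigma-1)+(1-\tau-\tilde\sigma)(\tau+\theta)$, $\widehat\varphi(\sigma)=(1-\tau)[(1+\theta)\sigma-1+\tau]-\tilde\sigma(\tau+\theta)$, $\widetilde\varphi(\sigma)=\sigma-(1-\tau-\theta)^2-\tilde\sigma(\tau+\theta)$,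 $\overline\varphi(\sigma)=[(1+\tau)\widehat\varphi(\sigma)-2\tau\varphi(\sigma)](1+\tau)\widetilde\varphi(\sigma)-(1-\theta)^2\varphi(\sigma)^2$. *)

theory Defs
  imports "HOL-Analysis.Analysis"
begin

text \<open>A function into (-inf, +inf] is modelled as an ereal-valued function that never takes -inf.\<close>

definition proper_fun :: "('a \<Rightarrow> ereal) \<Rightarrow> bool" where
  "proper_fun f \<longleftrightarrow> (\<forall>x. f x \<noteq> -\<infinity>) \<and> (\<exists>x. f x < \<infinity>)"

definition epigraph :: "('a \<Rightarrow> ereal) \<Rightarrow> ('a \<times> real) set" where
  "epigraph f = {(x, t). f x \<le> ereal t}"

definition convex_fun :: "('a::real_vector \<Rightarrow> ereal) \<Rightarrow> bool" where
  "convex_fun f \<longleftrightarrow> convex (epigraph f)"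

definition closed_fun :: "('a::topological_space \<Rightarrow> ereal) \<Rightarrow> bool" where
  "closed_fun f \<longleftrightarrow> closed (epigraph f)"

definition subdiff :: "('a::real_inner \<Rightarrow> ereal) \<Rightarrow> 'a \<Rightarrow> 'a set" where
  "subdiff f x = {u. f x < \<infinity> \<and> (\<forall>z. f z \<ge> f x + ereal (u \<bullet> (z - x)))}"

definition sym_pd :: "real^'n^'n \<Rightarrow> bool" where
  "sym_pd G \<longleftrightarrow> transpose G = G \<and> (\<forall>x. x \<noteq> 0 \<longrightarrow> x \<bullet> (G *v x) > 0)"

definition sym_psd :: "real^'n^'n \<Rightarrow> bool" where
  "sym_psd H \<longleftrightarrow> transpose H = H \<and> (\<forall>x. x \<bullet> (H *v x) \<ge> 0)"

definition qnorm2 :: "real^'n^'n \<Rightarrow> real^'n \<Rightarrow> real" where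
  "qnorm2 Q z = (Q *v z) \<bullet> z"

definition KKT_set ::
  "(real^'n \<Rightarrow> ereal) \<Rightarrow> (real^'p \<Rightarrow> ereal) \<Rightarrow> real^'n^'m \<Rightarrow> real^'p^'m \<Rightarrow> real^'m
   \<Rightarrow> ((real^'n) \<times> (real^'p) \<times> (real^'m)) set" where
  "KKT_set f g A B b = {(x, y, \<gamma>).
      transpose A *v \<gamma> \<in> subdiff f x \<and> transpose B *v \<gamma> \<in> subdiff g y \<and> A *v x + B *v y - b = 0}"

text \<open>The squared M-seminorm of (x,y,gamma), where M is the block matrix of the paper,
  written out as the quadratic form <M z, z>.\<close>
definition Mnorm2 ::
  "real^'n^'n \<Rightarrow> real^'p^'p \<Rightarrow> real^'p^'m \<Rightarrow> real \<Rightarrow> real \<Rightarrow> real \<Rightarrow>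
   real^'n \<Rightarrow> real^'p \<Rightarrow> real^'m \<Rightarrow> real" where
  "Mnorm2 G H B \<beta> \<tau> \<theta> x y \<gamma> =
     qnorm2 G x
     + qnorm2 (H + ((\<tau> - \<tau> * \<theta> + \<theta>) * \<beta> / (\<tau> + \<theta>)) *\<^sub>R (transpose B ** B)) y
     - 2 * (\<tau> / (\<tau> + \<theta>)) * ((B *v y) \<bullet> \<gamma>)
     + (1 / ((\<tau> + \<theta>) * \<beta>)) * (\<gamma> \<bullet> \<gamma>)"

definition d0 ::
  "(real^'n \<Rightarrow> ereal) \<Rightarrow> (real^'p \<Rightarrow> ereal) \<Rightarrow> real^'n^'m \<Rightarrow> real^'p^'m \<Rightarrow> real^'m \<Rightarrow>
   real^'n^'n \<Rightarrow> real^'p^'p \<Rightarrow> real \<Rightarrow> real \<Rightarrow> real \<Rightarrow>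
   real^'n \<Rightarrow> real^'p \<Rightarrow> real^'m \<Rightarrow> real" where
  "d0 f g A B b G H \<beta> \<tau> \<theta> x0 y0 \<gamma>0 =
     Inf ((\<lambda>(xs, ys, \<gamma>s). Mnorm2 G H B \<beta> \<tau> \<theta> (xs - x0) (ys - y0) (\<gamma>s - \<gamma>0)) ` KKT_set f g A B b)"

definition region_R :: "real \<Rightarrow> real \<Rightarrow> real \<Rightarrow> bool" where
  "region_R \<sigma>t \<tau> \<theta> \<longleftrightarrow> -1 < \<tau> \<and> \<tau> < 1 - \<sigma>t \<and> \<tau> + \<theta> > 0 \<and>
     (1 - \<tau>\<^sup>2) * (2 - \<tau> - \<theta> - \<sigma>t) - (1 - \<theta>)\<^sup>2 * (1 - \<tau> - \<sigma>t) > 0"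

definition vartheta :: "real \<Rightarrow> real \<Rightarrow> real \<Rightarrow> real" where
  "vartheta \<sigma>t \<tau> \<theta> = sqrt ((3 - 3 * \<tau> - 2 * \<sigma>t) * (4 - \<tau> - \<theta> - 2 * \<sigma>t)) - 2 * (1 - \<tau> - \<sigma>t)"

definition phi :: "real \<Rightarrow> real \<Rightarrow> real \<Rightarrow> real \<Rightarrow> real" where
  "phi \<sigma>t \<tau> \<theta> \<sigma> = (1 - \<tau>) * (\<sigma> - 1) + (1 - \<tau> - \<sigma>t) * (\<tau> + \<theta>)"

definition phi_hat :: "real \<Rightarrow> real \<Rightarrow> real \<Rightarrow> real \<Rightarrow> real" where
  "phi_hat \<sigma>t \<tau> \<theta> \<sigma> = (1 - \<tau>) * ((1 + \<theta>) * \<sigma> - 1 + \<tau>) - \<sigma>t * (\<tau> + \<theta>)"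

definition phi_tilde :: "real \<Rightarrow> real \<Rightarrow> real \<Rightarrow> real \<Rightarrow> real" where
  "phi_tilde \<sigma>t \<tau> \<theta> \<sigma> = \<sigma> - (1 - \<tau> - \<theta>)\<^sup>2 - \<sigma>t * (\<tau> + \<theta>)"

definition phi_bar :: "real \<Rightarrow> real \<Rightarrow> real \<Rightarrow> real \<Rightarrow> real" where
  "phi_bar \<sigma>t \<tau> \<theta> \<sigma> =
     ((1 + \<tau>) * phi_hat \<sigma>t \<tau> \<theta> \<sigma> - 2 * \<tau> * phi \<sigma>t \<tau> \<theta> \<sigma>) * (1 + \<tau>) * phi_tilde \<sigma>t \<tau> \<theta> \<sigma>
     - (1 - \<theta>)\<^sup>2 * (phi \<sigma>t \<tau> \<theta> \<sigma>)\<^sup>2"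

end

theory Submission
  imports Defs
begin

lemma inner_transpose: "(transpose B *v v) \<bullet> y = v \<bullet> (B *v (y::real^'p))"
  by (simp add: dot_lmul_matrix)

lemma sym_inner: assumes "transpose H = H"
  shows "(H *v x) \<bullet> y = (H *v y) \<bullet> (x::real^'n)"
proof -
  have "(H *v x) \<bullet> y = (transpose H *v y) \<bullet> x"
    using inner_transpose[of H y x] by (simp add: inner_commute)
  then show ?thesis using assms by simp
qed

lemma qnorm2_BtB: "qnorm2 (H + c *\<^sub>R (transpose B ** B)) y = qnorm2 H y + c * ((B *v y) \<bullet> (B *v y))"
proof -
  have "(transpose B ** B) *v y = transpose B *v (B *v y)" by (simp only: matrix_vector_mul_assoc)
  then have "((transpose B ** B) *v y) \<bullet> y = (B *v y) \<bullet> (B *v y)"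
    by (simp only: inner_transpose)
  then show ?thesis unfolding qnorm2_def
    by (simp add: matrix_vector_mult_add_rdistrib scaleR_matrix_vector_assoc[symmetric] inner_add_left)
qed

lemma Mn_expand:
  "Mnorm2 G H B \<beta> \<tau> \<theta> x y g = qnorm2 G x + qnorm2 H y
     + ((\<tau> - \<tau> * \<theta> + \<theta>) * \<beta> / (\<tau> + \<theta>)) * ((B *v y) \<bullet> (B *v y))
     - 2 * (\<tau> / (\<tau> + \<theta>)) * ((B *v y) \<bullet> g) + (1 / ((\<tau> + \<theta>) * \<beta>)) * (g \<bullet> g)"
  unfolding Mnorm2_def qnorm2_BtB by simp

lemma qnorm2_diff: assumes "transpose H = H"
  shows "qnorm2 H (x - y) = qnorm2 H x - 2 * ((H *v x) \<bullet> y) + qnorm2 H y"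
  unfolding qnorm2_def using sym_inner[OF assms, of y x]
  by (simp add: matrix_vector_mult_diff_distrib inner_diff_left inner_diff_right inner_commute)

lemma qnorm2_add: assumes "transpose H = H"
  shows "qnorm2 H (x + y) = qnorm2 H x + 2 * ((H *v x) \<bullet> y) + qnorm2 H y"
  unfolding qnorm2_def using sym_inner[OF assms, of y x]
  by (simp add: matrix_vector_right_distrib inner_add_left inner_add_right inner_commute)

lemma qnorm2_scale: "qnorm2 H (c *\<^sub>R x) = c^2 * qnorm2 H x"
  unfolding qnorm2_def by (simp add: matrix_vector_mult_scaleR power2_eq_square)

lemma qnorm2_neg: "qnorm2 H (- x) = qnorm2 H x"
  using qnorm2_scale[of H "-1" x] by simp

lemma qnorm2_0[simp]: "qnorm2 H 0 = 0"
  unfolding qnorm2_def by simp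

definition Mm :: "real \<Rightarrow> real \<Rightarrow> real \<Rightarrow> 'a::real_inner \<Rightarrow> 'a \<Rightarrow> real" where
  "Mm \<beta> \<tau> \<theta> v g = ((\<tau> - \<tau> * \<theta> + \<theta>) * \<beta> / (\<tau> + \<theta>)) * (v \<bullet> v)
     - 2 * (\<tau> / (\<tau> + \<theta>)) * (v \<bullet> g) + (1 / ((\<tau> + \<theta>) * \<beta>)) * (g \<bullet> g)"

lemma m_fejer:
  fixes a bb c0 g0 :: "'a::real_inner"
  assumes s: "\<tau> + \<theta> > 0" and b: "\<beta> > 0"
  shows "Mm \<beta> \<tau> \<theta> (-c0) (-g0)
       - Mm \<beta> \<tau> \<theta> (-bb) (-(g0 - (\<tau>*\<beta>) *\<^sub>R (a + c0) - (\<theta>*\<beta>) *\<^sub>R (a + bb)))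
       - Mm \<beta> \<tau> \<theta> (bb - c0) (-\<beta> *\<^sub>R (a + c0))
       + Mm \<beta> \<tau> \<theta> 0 (((\<tau> - 1)*\<beta>) *\<^sub>R (a + c0) + (\<theta>*\<beta>) *\<^sub>R (a + bb))
     = 2 * ((g0 - \<beta> *\<^sub>R (a + c0)) \<bullet> a) + 2 * ((g0 - (\<tau>*\<beta>) *\<^sub>R (a + c0) - \<beta> *\<^sub>R (a + bb)) \<bullet> bb)"
proof -
  obtain s where sd: "\<theta> = s - \<tau>" and sp: "s > 0" using s by (intro that[of "\<tau>+\<theta>"]) auto
  have "s \<noteq> 0" "\<beta> \<noteq> 0" using sp b by auto
  then show ?thesis unfolding sd Mm_def
    by (simp add: inner_diff_left inner_diff_right inner_add_left inner_add_right inner_commute field_simps)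
qed

lemma quad_nonneg:
  fixes x y :: "'a::real_inner"
  assumes a: "a > 0" and abc: "c^2 \<le> a * b"
  shows "0 \<le> a * (x \<bullet> x) - 2 * c * (x \<bullet> y) + b * (y \<bullet> y)"
proof -
  have "a * (a * (x \<bullet> x) - 2 * c * (x \<bullet> y) + b * (y \<bullet> y))
      = (a *\<^sub>R x - c *\<^sub>R y) \<bullet> (a *\<^sub>R x - c *\<^sub>R y) + (a * b - c^2) * (y \<bullet> y)"
    by (simp add: inner_diff_left inner_diff_right inner_commute algebra_simps power2_eq_square)
  also have "\<dots> \<ge> 0" using abc by (intro add_nonneg_nonneg mult_nonneg_nonneg) auto
  finally show ?thesis using a by (simp add: zero_le_mult_iff)
qed

lemma key_ineq: fixes t s u :: real
  assumes t0: "0 < t" and ta: "t < 2 - u" and u0: "0 \<le> u" and u1: "u < 1" and s0: "s > 0"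
   and al: "2 - s - u > 0"
   and reg: "t * (2 - t) * (2 - s - u) > (t - s)^2 * (2 - t - u)"
  shows "4 * (2 - t - u)^2 < (3 * (2 - t - u) + u) * (4 - s - 2 * u)"
proof (cases "3 * s < 4 + 4 * t - 2 * u")
  case True
  have a0: "2 - t - u > 0" using ta by linarith
  have "(2 - t - u) * (4 * (2 - t - u)) < (2 - t - u) * (3 * (4 - s - 2 * u))"
    using True a0 by (intro mult_strict_left_mono) auto
  also have "\<dots> \<le> (3 * (2 - t - u) + u) * (4 - s - 2 * u)"
  proof -
    have "u * (4 - s - 2 * u) \<ge> 0" using u0 al u1 by (intro mult_nonneg_nonneg) auto
    then show ?thesis by (simp add: algebra_simps)
  qed
  finally show ?thesis by (simp add: power2_eq_square algebra_simps)
next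
  case False
  have th: "t < 1/2" using False al u0 by linarith
  have al2: "3 * (2 - s - u) \<le> 2 - 4 * t" using False u0 by (simp add: not_less algebra_simps)
  have st: "s - t \<ge> 2/3" using False u1 t0 by linarith
  have "t * (2 - t) * (2 - s - u) \<le> (t * 2) * (2 - s - u)"
    using t0 al by (intro mult_right_mono mult_left_mono) auto
  also have "\<dots> \<le> (t * 2) * ((2 - 4 * t) / 3)"
    using t0 al2 by (intro mult_left_mono) auto
  also have "\<dots> \<le> 1/6"
  proof -
    have "0 \<le> (4 * t - 1)^2" by simp
    then show ?thesis by (simp add: power2_eq_square algebra_simps)
  qed
  finally have L: "t * (2 - t) * (2 - s - u) \<le> 1/6" .
  have "(2/3)^2 \<le> (t - s)^2"
  proof -
    have "(2/3::real)^2 \<le> (s - t)^2" using st by (intro power_mono) auto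
    then show ?thesis by (simp add: power2_commute)
  qed
  then have "(2/3)^2 * (1/2) \<le> (t - s)^2 * (2 - t - u)"
    using th u1 by (intro mult_mono) auto
  then show ?thesis using L reg by (simp add: power2_eq_square)
qed

lemma vartheta_pos:
  assumes "region_R \<sigma>t \<tau> \<theta>" "0 \<le> \<sigma>t" "\<sigma>t < 1"
  shows "vartheta \<sigma>t \<tau> \<theta> > 0"
proof -
  have r: "-1 < \<tau>" "\<tau> < 1 - \<sigma>t" "\<tau> + \<theta> > 0"
     "(1 - \<tau>\<^sup>2) * (2 - \<tau> - \<theta> - \<sigma>t) - (1 - \<theta>)\<^sup>2 * (1 - \<tau> - \<sigma>t) > 0"
    using assms(1) unfolding region_R_def by auto
  have t2: "1 - \<tau>\<^sup>2 > 0"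
  proof -
    have "(1 - \<tau>) * (1 + \<tau>) > 0" using r assms(2,3) by (intro mult_pos_pos) auto
    then show ?thesis by (simp add: power2_eq_square algebra_simps)
  qed
  have al: "2 - \<tau> - \<theta> - \<sigma>t > 0"
  proof (rule ccontr)
    assume "\<not> ?thesis"
    then have "(1 - \<tau>\<^sup>2) * (2 - \<tau> - \<theta> - \<sigma>t) \<le> 0"
      using t2 by (intro mult_nonneg_nonpos) auto
    moreover have "(1 - \<theta>)\<^sup>2 * (1 - \<tau> - \<sigma>t) \<ge> 0" using r by auto
    ultimately show False using r(4) by linarith
  qed
  have key: "4 * (1 - \<tau> - \<sigma>t)^2 < (3 - 3 * \<tau> - 2 * \<sigma>t) * (4 - \<tau> - \<theta> - 2 * \<sigma>t)"
    using key_ineq[of "1 + \<tau>" \<sigma>t "\<tau> + \<theta>"] r al assms(2,3)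
    by (simp add: algebra_simps power2_eq_square)
  have "2 * (1 - \<tau> - \<sigma>t) < sqrt ((3 - 3 * \<tau> - 2 * \<sigma>t) * (4 - \<tau> - \<theta> - 2 * \<sigma>t))"
    using key r by (intro real_less_rsqrt) (simp add: power2_eq_square algebra_simps)
  then show ?thesis unfolding vartheta_def by simp
qed

lemma psi_expand:
  fixes B :: "real^'p^'m" and H :: "real^'p^'p"
  assumes Hs: "transpose H = H"
  shows "(- (c \<bullet> (B *v (y + t *\<^sub>R v))) + \<beta> / 2 * (norm (a + B *v (y + t *\<^sub>R v) - b))\<^sup>2
            + 1 / 2 * qnorm2 H ((y + t *\<^sub>R v) - yp))
       - (- (c \<bullet> (B *v y)) + \<beta> / 2 * (norm (a + B *v y - b))\<^sup>2 + 1 / 2 * qnorm2 H (y - yp))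
       = - t * ((c - \<beta> *\<^sub>R (a + B *v y - b)) \<bullet> (B *v v) - (H *v (y - yp)) \<bullet> v)
         + t^2 / 2 * (\<beta> * ((B *v v) \<bullet> (B *v v)) + qnorm2 H v)"
proof -
  have e1: "(y + t *\<^sub>R v) - yp = (y - yp) + t *\<^sub>R v" by simp
  have e2: "a + B *v (y + t *\<^sub>R v) - b = (a + B *v y - b) + t *\<^sub>R (B *v v)"
    by (simp add: matrix_vector_right_distrib matrix_vector_mult_scaleR)
  have q: "qnorm2 H ((y - yp) + t *\<^sub>R v) = qnorm2 H (y - yp) + 2 * t * ((H *v (y - yp)) \<bullet> v) + t^2 * qnorm2 H v"
    using qnorm2_add[OF Hs, of "y - yp" "t *\<^sub>R v"] qnorm2_scale[of H t v] by simp
  show ?thesis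
    unfolding e1 e2 q power2_norm_eq_inner
    by (simp add: matrix_vector_right_distrib matrix_vector_mult_scaleR inner_add_left inner_add_right
        inner_diff_left inner_diff_right inner_commute algebra_simps power2_eq_square)
qed

lemma subgrad_from_min:
  fixes g :: "real^'p \<Rightarrow> ereal" and B :: "real^'p^'m" and H :: "real^'p^'p"
  assumes conv: "convex_fun g" and nm: "\<And>x. g x \<noteq> -\<infinity>" and fin: "g y < \<infinity>"
    and H: "sym_psd H" and b0: "\<beta> \<ge> 0"
    and mn: "\<And>w. g y + ereal (- (c \<bullet> (B *v y)) + \<beta> / 2 * (norm (a + B *v y - b))\<^sup>2 + 1 / 2 * qnorm2 H (y - yp))
               \<le> g w + ereal (- (c \<bullet> (B *v w)) + \<beta> / 2 * (norm (a + B *v w - b))\<^sup>2 + 1 / 2 * qnorm2 H (w - yp))"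
  shows "g w \<ge> g y + ereal ((c - \<beta> *\<^sub>R (a + B *v y - b)) \<bullet> (B *v (w - y)) - (H *v (y - yp)) \<bullet> (w - y))"
proof (cases "g w = \<infinity>")
  case True then show ?thesis by simp
next
  case False
  define \<psi> where "\<psi> w = - (c \<bullet> (B *v w)) + \<beta> / 2 * (norm (a + B *v w - b))\<^sup>2 + 1 / 2 * qnorm2 H (w - yp)" for w
  have Hs: "transpose H = H" and Hp: "\<And>x. qnorm2 H x \<ge> 0" using H unfolding sym_psd_def qnorm2_def
    by (auto simp: inner_commute)
  obtain gy where gy: "g y = ereal gy" using fin nm[of y] by (cases "g y") auto
  obtain gw where gw: "g w = ereal gw" using False nm[of w] by (cases "g w") auto
  define v where "v = w - y"
  define L where "L = (c - \<beta> *\<^sub>R (a + B *v y - b)) \<bullet> (B *v v) - (H *v (y - yp)) \<bullet> v"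
  define C where "C = \<beta> * ((B *v v) \<bullet> (B *v v)) + qnorm2 H v"
  have C0: "C \<ge> 0" unfolding C_def using b0 Hp[of v] by simp
  have psi: "\<psi> (y + t *\<^sub>R v) - \<psi> y = - t * L + t^2 / 2 * C" for t
    unfolding \<psi>_def L_def C_def using psi_expand[OF Hs] by simp
  have "gw \<ge> gy + L"
  proof (rule ccontr)
    assume "\<not> ?thesis"
    define \<epsilon> where "\<epsilon> = gy + L - gw"
    have ep: "\<epsilon> > 0" using \<open>\<not> gy + L \<le> gw\<close> unfolding \<epsilon>_def by simp
    define t where "t = min (1/2) (\<epsilon> / (C + 1))"
    have t0: "t > 0" unfolding t_def using ep C0 by simp
    have t1: "t < 1" unfolding t_def by simp
    have tC: "t * C < \<epsilon>"
    proof -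
      have "t * C \<le> (\<epsilon> / (C + 1)) * C" unfolding t_def using C0 by (intro mult_right_mono) auto
      also have "\<dots> < \<epsilon>" using ep C0 by (simp add: field_simps)
      finally show ?thesis .
    qed
    have epi: "(y, gy) \<in> epigraph g" "(w, gw) \<in> epigraph g" unfolding epigraph_def using gy gw by auto
    have cv: "convex (epigraph g)" using conv unfolding convex_fun_def .
    have "(1 - t) *\<^sub>R (y, gy) + t *\<^sub>R (w, gw) \<in> epigraph g"
      using convexD[OF cv epi(1) epi(2), of "1 - t" t] t0 t1 by simp
    moreover have "(1 - t) *\<^sub>R y + t *\<^sub>R w = y + t *\<^sub>R v" unfolding v_def by (simp add: algebra_simps)
    ultimately have cvx: "g (y + t *\<^sub>R v) \<le> ereal ((1 - t) * gy + t * gw)"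
      unfolding epigraph_def by simp
    have "ereal (gy + \<psi> y) \<le> g (y + t *\<^sub>R v) + ereal (\<psi> (y + t *\<^sub>R v))"
      using mn[of "y + t *\<^sub>R v"] gy unfolding \<psi>_def by simp
    also have "\<dots> \<le> ereal ((1 - t) * gy + t * gw) + ereal (\<psi> (y + t *\<^sub>R v))"
      using cvx by (rule add_right_mono)
    finally have "gy + \<psi> y \<le> (1 - t) * gy + t * gw + \<psi> (y + t *\<^sub>R v)" by simp
    then have "t * (gy - gw + L) \<le> t * (t * C / 2)" using psi[of t] by (simp add: algebra_simps power2_eq_square)
    then have "gy - gw + L \<le> t * C / 2" using t0 by simp
    then show False using tC ep unfolding \<epsilon>_def by simp
  qed
  then show ?thesis using gy gw unfolding L_def v_def by simp
qed

lemma pq_bound: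
  fixes pp qq r w :: "'a::real_inner"
  assumes s: "\<tau> + \<theta> > 0" and b: "\<beta> > 0" and t1: "\<tau> < 1" and l: "lam > 0"
    and A1: "4 - \<tau> - \<theta> - 2 * \<sigma>t > 0"
    and hyp: "(1 + \<tau> + lam * (1 - \<tau> - \<sigma>t))^2
              \<le> (lam * ((4 - \<tau> - \<theta> - 2 * \<sigma>t) / 2)) * (lam * ((3 - 3 * \<tau> - 2 * \<sigma>t) / 2))"
  shows "0 \<le> lam * ((1 - \<tau>) * \<beta> * (qq \<bullet> qq) + (1 / ((\<tau> + \<theta>) * \<beta>)) * (pp \<bullet> pp))
        + lam * ((1 - \<tau>) * \<beta> * ((qq - w) \<bullet> (qq - w))
               + (1 / ((\<tau> + \<theta>) * \<beta>)) * ((pp + ((\<tau> + \<theta>) * \<beta>) *\<^sub>R r) \<bullet> (pp + ((\<tau> + \<theta>) * \<beta>) *\<^sub>R r)))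
        + lam * \<beta> * ((2 - \<tau> - \<theta> - \<sigma>t) * (r \<bullet> r) - 2 * (1 - \<tau> - \<sigma>t) * (r \<bullet> w) + (1 - \<tau> - \<sigma>t) * (w \<bullet> w))
        - 2 * (1 + \<tau>) * \<beta> * (r \<bullet> w)"
proof -
  define Q where "Q = (lam * ((4 - \<tau> - \<theta> - 2 * \<sigma>t) / 2)) * (r \<bullet> r) - 2 * (1 + \<tau> + lam * (1 - \<tau> - \<sigma>t)) * (r \<bullet> w)
      + (lam * ((3 - 3 * \<tau> - 2 * \<sigma>t) / 2)) * (w \<bullet> w)"
  have Q0: "Q \<ge> 0" unfolding Q_def
    by (rule quad_nonneg) (use l A1 hyp in auto)
  obtain s where sd: "\<theta> = s - \<tau>" and sp: "s > 0" using s by (intro that[of "\<tau>+\<theta>"]) auto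
  have sn: "s \<noteq> 0" "\<beta> \<noteq> 0" using sp b by auto
  have eq: "lam * ((1 - \<tau>) * \<beta> * (qq \<bullet> qq) + (1 / ((\<tau> + \<theta>) * \<beta>)) * (pp \<bullet> pp))
        + lam * ((1 - \<tau>) * \<beta> * ((qq - w) \<bullet> (qq - w))
               + (1 / ((\<tau> + \<theta>) * \<beta>)) * ((pp + ((\<tau> + \<theta>) * \<beta>) *\<^sub>R r) \<bullet> (pp + ((\<tau> + \<theta>) * \<beta>) *\<^sub>R r)))
        + lam * \<beta> * ((2 - \<tau> - \<theta> - \<sigma>t) * (r \<bullet> r) - 2 * (1 - \<tau> - \<sigma>t) * (r \<bullet> w) + (1 - \<tau> - \<sigma>t) * (w \<bullet> w))
        - 2 * (1 + \<tau>) * \<beta> * (r \<bullet> w)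
      = 2 * lam * (1 - \<tau>) * \<beta> * ((qq - (1/2) *\<^sub>R w) \<bullet> (qq - (1/2) *\<^sub>R w))
        + (2 * lam / ((\<tau> + \<theta>) * \<beta>)) * ((pp + ((\<tau> + \<theta>) * \<beta> / 2) *\<^sub>R r) \<bullet> (pp + ((\<tau> + \<theta>) * \<beta> / 2) *\<^sub>R r))
        + \<beta> * Q"
    unfolding Q_def sd using sn
    by (simp add: inner_diff_left inner_diff_right inner_add_left inner_add_right inner_commute field_simps)
  show ?thesis unfolding eq using Q0 b l t1 s
    by (intro add_nonneg_nonneg mult_nonneg_nonneg) auto
qed

lemma Mn_decomp:
  assumes s: "\<tau> + \<theta> > 0" and b: "\<beta> > 0"
  shows "Mnorm2 G H B \<beta> \<tau> \<theta> x y g = qnorm2 G x + qnorm2 H y + (1 - \<tau>) * \<beta> * ((B *v y) \<bullet> (B *v y))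
      + (1 / ((\<tau> + \<theta>) * \<beta>)) * ((g - (\<tau> * \<beta>) *\<^sub>R (B *v y)) \<bullet> (g - (\<tau> * \<beta>) *\<^sub>R (B *v y)))"
proof -
  obtain s where sd: "\<theta> = s - \<tau>" and sp: "s > 0" using s by (intro that[of "\<tau>+\<theta>"]) auto
  have sn: "s \<noteq> 0" "\<beta> \<noteq> 0" using sp b by auto
  show ?thesis unfolding Mn_expand sd using sn
    by (simp add: inner_diff_left inner_diff_right inner_commute field_simps)
qed

lemma final_k2:
  fixes f fh ft R RW W P2 PW Hd Hd' Hx D :: real
  assumes s: "s > 0" and b: "\<beta> > 0" and t: "1 + \<tau> > 0"
    and f: "f \<ge> 0" and ft: "ft > 0" and sg: "\<sigma> \<ge> 0"
    and fb: "((1 + \<tau>) * fh - 2 * \<tau> * f) * (1 + \<tau>) * ft - (1 - \<theta>)\<^sup>2 * f\<^sup>2 \<ge> 0"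
    and red: "D \<ge> (\<beta> / s) * (ft * R - 2 * f * RW + fh * W) + \<sigma> * Hd"
    and Mk: "\<beta> * (- (1 + \<tau>) * RW + \<tau> * W + (1 - \<theta>) * PW) - Hd + Hx \<ge> 0"
    and H3: "Hd - 2 * Hx + Hd' \<ge> 0"
    and C4: "ft^2 * P2 - 2 * ft * (f * (1 - \<theta>) / (1 + \<tau>)) * PW + (f * (1 - \<theta>) / (1 + \<tau>))^2 * W \<ge> 0"
    and W0: "W \<ge> 0" and Hd0: "Hd \<ge> 0"
  shows "0 \<le> D + (ft / (s * \<beta>) * (\<beta>^2 * P2) + f / (s * (1 + \<tau>)) * Hd')
             - (ft / (s * \<beta>) * (\<beta>^2 * R) + f / (s * (1 + \<tau>)) * Hd)"
proof -
  define Mke where "Mke = \<beta> * (- (1 + \<tau>) * RW + \<tau> * W + (1 - \<theta>) * PW) - Hd + Hx"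
  define H3e where "H3e = Hd - 2 * Hx + Hd'"
  define C4e where "C4e = ft^2 * P2 - 2 * ft * (f * (1 - \<theta>) / (1 + \<tau>)) * PW + (f * (1 - \<theta>) / (1 + \<tau>))^2 * W"
  define fbe where "fbe = ((1 + \<tau>) * fh - 2 * \<tau> * f) * (1 + \<tau>) * ft - (1 - \<theta>)\<^sup>2 * f\<^sup>2"
  obtain tt where td: "\<tau> = tt - 1" and tp: "tt > 0" using t by (intro that[of "1 + \<tau>"]) auto
  have nz: "s \<noteq> 0" "\<beta> \<noteq> 0" "tt \<noteq> 0" "ft \<noteq> 0" using s b tp ft by auto
  have id: "(\<beta> / s) * (ft * R - 2 * f * RW + fh * W) + \<sigma> * Hd
      + (ft / (s * \<beta>) * (\<beta>^2 * P2) + f / (s * (1 + \<tau>)) * Hd')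
      - (ft / (s * \<beta>) * (\<beta>^2 * R) + f / (s * (1 + \<tau>)) * Hd)
      - (2 * f / (s * (1 + \<tau>))) * Mke - (f / (s * (1 + \<tau>))) * H3e - (\<beta> / (s * ft)) * C4e
      = (\<beta> / (s * (1 + \<tau>)^2 * ft)) * fbe * W + \<sigma> * Hd"
    unfolding Mke_def H3e_def C4e_def fbe_def td using nz
    by (simp add: field_simps power2_eq_square)
  have p1: "(2 * f / (s * (1 + \<tau>))) * Mke \<ge> 0" unfolding Mke_def using Mk f s t
    by (intro mult_nonneg_nonneg divide_nonneg_pos) auto
  have p2: "(f / (s * (1 + \<tau>))) * H3e \<ge> 0" unfolding H3e_def using H3 f s t
    by (intro mult_nonneg_nonneg divide_nonneg_pos) auto
  have p3: "(\<beta> / (s * ft)) * C4e \<ge> 0" unfolding C4e_def using C4 b s ft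
    by (intro mult_nonneg_nonneg divide_nonneg_pos) auto
  have p4: "(\<beta> / (s * (1 + \<tau>)^2 * ft)) * fbe * W + \<sigma> * Hd \<ge> 0" unfolding fbe_def using fb b s t ft W0 sg Hd0
    by (intro add_nonneg_nonneg mult_nonneg_nonneg divide_nonneg_pos) auto
  show ?thesis using id p1 p2 p3 p4 red by linarith
qed

lemma Mn_Mm: "Mnorm2 G H B \<beta> \<tau> \<theta> x y g = qnorm2 G x + qnorm2 H y + Mm \<beta> \<tau> \<theta> (B *v y) g"
  unfolding Mn_expand Mm_def by simp

lemma red_vec:
  fixes r w :: "'a::real_inner"
  assumes s: "\<tau> + \<theta> > 0" and b: "\<beta> > 0"
  shows "\<sigma>' * Mm \<beta> \<tau> \<theta> w ((-\<beta>) *\<^sub>R (r - w)) - (\<sigma>t / \<beta>) * (norm ((-\<beta>) *\<^sub>R (r - w)))\<^sup>2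
          - Mm \<beta> \<tau> \<theta> 0 (((\<tau> - 1) * \<beta>) *\<^sub>R (r - w) + (\<theta> * \<beta>) *\<^sub>R r)
        = (\<beta> / (\<tau> + \<theta>)) * (phi_tilde \<sigma>t \<tau> \<theta> \<sigma>' * (r \<bullet> r) - 2 * phi \<sigma>t \<tau> \<theta> \<sigma>' * (r \<bullet> w)
            + phi_hat \<sigma>t \<tau> \<theta> \<sigma>' * (w \<bullet> w))"
proof -
  obtain s where sd: "\<theta> = s - \<tau>" and sp: "s > 0" using s by (intro that[of "\<tau>+\<theta>"]) auto
  have "s \<noteq> 0" "\<beta> \<noteq> 0" using sp b by auto
  then show ?thesis unfolding sd Mm_def phi_def phi_hat_def phi_tilde_def power2_norm_eq_inner
    by (simp add: inner_diff_left inner_diff_right inner_add_left inner_add_right inner_commute field_simps power2_eq_square)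
qed

lemma phi_one:
  assumes s: "\<tau> + \<theta> > 0"
  shows "(\<beta> / (\<tau> + \<theta>)) * (phi_tilde \<sigma>t \<tau> \<theta> 1 * R - 2 * phi \<sigma>t \<tau> \<theta> 1 * RW + phi_hat \<sigma>t \<tau> \<theta> 1 * W)
     = \<beta> * ((2 - \<tau> - \<theta> - \<sigma>t) * R - 2 * (1 - \<tau> - \<sigma>t) * RW + (1 - \<tau> - \<sigma>t) * W)"
proof -
  obtain s where sd: "\<theta> = s - \<tau>" and sp: "s > 0" using s by (intro that[of "\<tau>+\<theta>"]) auto
  have "s \<noteq> 0" using sp by auto
  then show ?thesis unfolding sd phi_def phi_hat_def phi_tilde_def
    by (simp add: field_simps power2_eq_square)
qed

lemma ereal_two_ineq:
  fixes f :: "'a \<Rightarrow> ereal"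
  assumes "f x \<noteq> -\<infinity>" "f y \<noteq> -\<infinity>" "f x < \<infinity>" "f y < \<infinity>"
    "f y \<ge> f x + ereal a" "f x \<ge> f y + ereal c"
  shows "a + c \<le> 0"
proof -
  obtain fx where fx: "f x = ereal fx" using assms(1,3) by (cases "f x") auto
  obtain fy where fy: "f y = ereal fy" using assms(2,4) by (cases "f y") auto
  show ?thesis using assms(5,6) fx fy by simp
qed

lemma lam_hyp:
  assumes vt: "vartheta \<sigma>t \<tau> \<theta> > 0" and t: "1 + \<tau> > 0" and a: "1 - \<tau> - \<sigma>t > 0"
    and X1: "3 - 3 * \<tau> - 2 * \<sigma>t \<ge> 0" and X2: "4 - \<tau> - \<theta> - 2 * \<sigma>t \<ge> 0"
  shows "(1 + \<tau> + (2 * (1 + \<tau> + vartheta \<sigma>t \<tau> \<theta>) / vartheta \<sigma>t \<tau> \<theta>) * (1 - \<tau> - \<sigma>t))^2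
     \<le> ((2 * (1 + \<tau> + vartheta \<sigma>t \<tau> \<theta>) / vartheta \<sigma>t \<tau> \<theta>) * ((4 - \<tau> - \<theta> - 2 * \<sigma>t) / 2))
       * ((2 * (1 + \<tau> + vartheta \<sigma>t \<tau> \<theta>) / vartheta \<sigma>t \<tau> \<theta>) * ((3 - 3 * \<tau> - 2 * \<sigma>t) / 2))"
proof -
  define v where "v = vartheta \<sigma>t \<tau> \<theta>"
  define lam where "lam = 2 * (1 + \<tau> + v) / v"
  define X where "X = (3 - 3 * \<tau> - 2 * \<sigma>t) * (4 - \<tau> - \<theta> - 2 * \<sigma>t)"
  have X0: "X \<ge> 0" unfolding X_def using X1 X2 by simp
  have vX: "v + 2 * (1 - \<tau> - \<sigma>t) = sqrt X" unfolding v_def vartheta_def X_def by simp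
  have sq: "(v + 2 * (1 - \<tau> - \<sigma>t))^2 = X" using vX X0 by simp
  have v0: "v > 0" using vt unfolding v_def .
  have l0: "lam > 0" unfolding lam_def using v0 t by simp
  have lv: "lam * v = 2 * (1 + \<tau> + v)" unfolding lam_def using v0 by simp
  have rhs: "(lam * ((4 - \<tau> - \<theta> - 2 * \<sigma>t) / 2)) * (lam * ((3 - 3 * \<tau> - 2 * \<sigma>t) / 2))
      = (lam * (v + 2 * (1 - \<tau> - \<sigma>t)) / 2)^2"
    unfolding power_mult_distrib power_divide sq unfolding X_def by (simp add: power2_eq_square)
  have e0: "lam * (v + 2 * (1 - \<tau> - \<sigma>t)) / 2 = (lam * v) / 2 + lam * (1 - \<tau> - \<sigma>t)"
    by (simp add: field_simps)
  have e: "lam * (v + 2 * (1 - \<tau> - \<sigma>t)) / 2 = (1 + \<tau> + v) + lam * (1 - \<tau> - \<sigma>t)"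
    unfolding e0 lv by simp
  have "(1 + \<tau> + lam * (1 - \<tau> - \<sigma>t))^2 \<le> ((1 + \<tau> + v) + lam * (1 - \<tau> - \<sigma>t))^2"
    using t l0 a v0 by (intro power_mono) auto
  also have "\<dots> = (lam * (v + 2 * (1 - \<tau> - \<sigma>t)) / 2)^2" unfolding e ..
  also have "\<dots> = (lam * ((4 - \<tau> - \<theta> - 2 * \<sigma>t) / 2)) * (lam * ((3 - 3 * \<tau> - 2 * \<sigma>t) / 2))"
    unfolding rhs ..
  finally show ?thesis unfolding lam_def v_def .
qed

lemma final_k1:
  fixes f fh ft R RW W Hd D E :: real
  assumes s: "s > 0" and b: "\<beta> > 0" and t: "1 + \<tau> > 0" and fh: "fh \<ge> 0" and sg: "\<sigma> \<ge> 0"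
    and red: "D \<ge> (\<beta> / s) * (ft * R - 2 * f * RW + fh * W) + \<sigma> * Hd"
    and E: "E \<ge> f / (s * (1 + \<tau>)) * (2 * (1 + \<tau>) * \<beta> * RW + Hd)"
    and W0: "W \<ge> 0" and Hd0: "Hd \<ge> 0"
  shows "0 \<le> D + E - (ft / (s * \<beta>) * (\<beta>^2 * R) + f / (s * (1 + \<tau>)) * Hd)"
proof -
  obtain tt where td: "\<tau> = tt - 1" and tp: "tt > 0" using t by (intro that[of "1 + \<tau>"]) auto
  have nz: "s \<noteq> 0" "\<beta> \<noteq> 0" "tt \<noteq> 0" using s b tp by auto
  have id: "(\<beta> / s) * (ft * R - 2 * f * RW + fh * W) + \<sigma> * Hd + f / (s * (1 + \<tau>)) * (2 * (1 + \<tau>) * \<beta> * RW + Hd)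
     - (ft / (s * \<beta>) * (\<beta>^2 * R) + f / (s * (1 + \<tau>)) * Hd) = (\<beta> / s) * fh * W + \<sigma> * Hd"
    unfolding td using nz by (simp add: field_simps power2_eq_square)
  have "(\<beta> / s) * fh * W + \<sigma> * Hd \<ge> 0" using s b fh W0 sg Hd0 by simp
  then show ?thesis using id red E by linarith
qed

lemma alpha_pos:
  assumes "region_R \<sigma>t \<tau> \<theta>" "0 \<le> \<sigma>t" "\<sigma>t < 1"
  shows "2 - \<tau> - \<theta> - \<sigma>t > 0"
proof -
  have r: "-1 < \<tau>" "\<tau> < 1 - \<sigma>t" "\<tau> + \<theta> > 0"
     "(1 - \<tau>\<^sup>2) * (2 - \<tau> - \<theta> - \<sigma>t) - (1 - \<theta>)\<^sup>2 * (1 - \<tau> - \<sigma>t) > 0"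
    using assms(1) unfolding region_R_def by auto
  have t2: "1 - \<tau>\<^sup>2 > 0"
  proof -
    have "(1 - \<tau>) * (1 + \<tau>) > 0" using r assms(2,3) by (intro mult_pos_pos) auto
    then show ?thesis by (simp add: power2_eq_square algebra_simps)
  qed
  show ?thesis
  proof (rule ccontr)
    assume "\<not> ?thesis"
    then have "(1 - \<tau>\<^sup>2) * (2 - \<tau> - \<theta> - \<sigma>t) \<le> 0"
      using t2 by (intro mult_nonneg_nonpos) auto
    moreover have "(1 - \<theta>)\<^sup>2 * (1 - \<tau> - \<sigma>t) \<ge> 0" using r by auto
    ultimately show False using r(4) by linarith
  qed
qed

lemma pd_facts:
  fixes G :: "real^'n^'n"
  assumes "sym_pd G"
  shows "transpose G = G" "\<And>x. qnorm2 G x \<ge> 0" "\<And>v. G *v (matrix_inv G *v v) = v"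
proof -
  show "transpose G = G" using assms unfolding sym_pd_def by simp
  show "qnorm2 G x \<ge> 0" for x
  proof (cases "x = 0")
    case True then show ?thesis unfolding qnorm2_def by simp
  next
    case False then show ?thesis using assms unfolding sym_pd_def qnorm2_def
      by (auto simp: inner_commute intro: less_imp_le)
  qed
  have inj: "inj ((*v) G)"
  proof (rule injI)
    fix x y assume "G *v x = G *v y"
    then have "G *v (x - y) = 0" by (simp add: matrix_vector_mult_diff_distrib)
    then have "(x - y) \<bullet> (G *v (x - y)) = 0" by simp
    then show "x = y" using assms unfolding sym_pd_def by (metis less_irrefl eq_iff_diff_eq_0)
  qed
  then obtain B' where "B' ** G = mat 1" using matrix_left_invertible_injective by blast
  then have inv: "invertible G" using invertible_left_inverse by blast
  then have "G ** matrix_inv G = mat 1 \<and> matrix_inv G ** G = mat 1"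
    unfolding matrix_inv_def invertible_def by (rule someI_ex)
  then show "G *v (matrix_inv G *v v) = v" for v
    by (simp add: matrix_vector_mul_assoc)
qed

lemma psd_facts:
  fixes H :: "real^'n^'n"
  assumes "sym_psd H"
  shows "transpose H = H" "\<And>x. qnorm2 H x \<ge> 0"
  using assms unfolding sym_psd_def qnorm2_def by (auto simp: inner_commute)

lemma combine:
  fixes lam d P D1 Qp Hd dpq Ppq T0 g0 g1 \<beta> :: real
  assumes l: "lam \<ge> 1" and F1: "d - P - D1 \<ge> 0" and F2: "D1 \<ge> \<beta> * Qp + Hd"
    and pq: "0 \<le> lam * dpq + lam * Ppq + lam * \<beta> * Qp - T0"
    and dD: "d = g0 + dpq" and PD: "P = g1 + Ppq" and g0: "g0 \<ge> 0" and g1: "g1 \<ge> 0" and Hd: "Hd \<ge> 0"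
  shows "T0 + Hd \<le> (2 * lam) * d"
proof -
  have a: "lam * (d - P - D1) \<ge> 0" using l F1 by simp
  have b: "lam * (D1 - \<beta> * Qp - Hd) \<ge> 0" using l F2 by simp
  have c: "lam * g0 \<ge> 0" "lam * g1 \<ge> 0" using l g0 g1 by auto
  have e: "(lam - 1) * Hd \<ge> 0" using l Hd by simp
  have id: "(2 * lam) * d - (T0 + Hd) = lam * (d - P - D1) + lam * (D1 - \<beta> * Qp - Hd) + lam * g0 + lam * g1
     + (lam * dpq + lam * Ppq + lam * \<beta> * Qp - T0) + (lam - 1) * Hd"
    unfolding dD PD by (simp add: algebra_simps)
  show ?thesis using id a b c e pq by linarith
qed

theorem theorem2p9:
  fixes f :: "real^'n \<Rightarrow> ereal" and g :: "real^'p \<Rightarrow> ereal"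
    and A :: "real^'n^'m" and B :: "real^'p^'m" and b :: "real^'m"
    and G :: "real^'n^'n" and H :: "real^'p^'p"
    and \<beta> \<sigma>t \<sigma>h \<tau> \<theta> \<sigma> :: real
    and x :: "nat \<Rightarrow> real^'n" and y :: "nat \<Rightarrow> real^'p" and \<gamma> :: "nat \<Rightarrow> real^'m"
    and xt :: "nat \<Rightarrow> real^'n" and u :: "nat \<Rightarrow> real^'n" and \<gamma>t :: "nat \<Rightarrow> real^'m"
    and k :: nat
  assumes f_pcc: "proper_fun f" "convex_fun f" "closed_fun f"
    and g_pcc: "proper_fun g" "convex_fun g" "closed_fun g"
    and KKT_ne: "KKT_set f g A B b \<noteq> {}"
    and \<beta>_pos: "\<beta> > 0"
    and \<sigma>t: "0 \<le> \<sigma>t" "\<sigma>t < 1"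
    and \<sigma>h: "0 \<le> \<sigma>h" "\<sigma>h < 1"
    and G: "sym_pd G" and H: "sym_psd H"
    and region: "region_R \<sigma>t \<tau> \<theta>"
    and gt_def: "\<And>j. j \<ge> 1 \<Longrightarrow> \<gamma>t j = \<gamma> (j - 1) - \<beta> *\<^sub>R (A *v xt j + B *v y (j - 1) - b)"
    and u_sub: "\<And>j. j \<ge> 1 \<Longrightarrow> u j + transpose A *v \<gamma>t j \<in> subdiff f (xt j)"
    and x_err: "\<And>j. j \<ge> 1 \<Longrightarrow>
        qnorm2 G (xt j - x (j - 1) + matrix_inv G *v u j)
          \<le> (\<sigma>t / \<beta>) * (norm (\<gamma>t j - \<gamma> (j - 1)))\<^sup>2 + \<sigma>h * qnorm2 G (xt j - x (j - 1))"
    and y_opt: "\<And>j w. j \<ge> 1 \<Longrightarrow>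
        g (y j) + ereal (- ((\<gamma> (j - 1) - (\<tau> * \<beta>) *\<^sub>R (A *v xt j + B *v y (j - 1) - b)) \<bullet> (B *v y j))
                         + \<beta> / 2 * (norm (A *v xt j + B *v y j - b))\<^sup>2
                         + 1 / 2 * qnorm2 H (y j - y (j - 1)))
        \<le> g w + ereal (- ((\<gamma> (j - 1) - (\<tau> * \<beta>) *\<^sub>R (A *v xt j + B *v y (j - 1) - b)) \<bullet> (B *v w))
                         + \<beta> / 2 * (norm (A *v xt j + B *v w - b))\<^sup>2
                         + 1 / 2 * qnorm2 H (w - y (j - 1)))"
    and x_upd: "\<And>j. j \<ge> 1 \<Longrightarrow> x j = x (j - 1) - matrix_inv G *v u j"
    and g_upd: "\<And>j. j \<ge> 1 \<Longrightarrow>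
        \<gamma> j = (\<gamma> (j - 1) - (\<tau> * \<beta>) *\<^sub>R (A *v xt j + B *v y (j - 1) - b))
              - (\<theta> * \<beta>) *\<^sub>R (A *v xt j + B *v y j - b)"
    and \<sigma>: "\<sigma>h \<le> \<sigma>" "\<sigma> < 1"
    and \<sigma>_phi: "phi \<sigma>t \<tau> \<theta> \<sigma> \<ge> 0" "phi_hat \<sigma>t \<tau> \<theta> \<sigma> \<ge> 0"
       "phi_tilde \<sigma>t \<tau> \<theta> \<sigma> > 0" "phi_bar \<sigma>t \<tau> \<theta> \<sigma> \<ge> 0"
    and k: "k \<ge> 1"
  shows
    "let q = (\<lambda>j. - \<beta> *\<^sub>R (A *v xt j + B *v y j - b));
         \<eta> = (\<lambda>j. if j = 0 then
                   4 * (1 + \<tau> + vartheta \<sigma>t \<tau> \<theta>) * phi \<sigma>t \<tau> \<theta> \<sigma>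
                     / ((\<tau> + \<theta>) * (1 + \<tau>) * vartheta \<sigma>t \<tau> \<theta>)
                     * d0 f g A B b G H \<beta> \<tau> \<theta> (x 0) (y 0) (\<gamma> 0)
                 else phi_tilde \<sigma>t \<tau> \<theta> \<sigma> / ((\<tau> + \<theta>) * \<beta>) * (norm (q j))\<^sup>2
                   + phi \<sigma>t \<tau> \<theta> \<sigma> / ((\<tau> + \<theta>) * (1 + \<tau>)) * qnorm2 H (y j - y (j - 1)))
     in Mnorm2 G H B \<beta> \<tau> \<theta> (xt k - x k) 0 (\<gamma>t k - \<gamma> k) + \<eta> k
        \<le> \<sigma> * Mnorm2 G H B \<beta> \<tau> \<theta> (xt k - x (k - 1)) (y k - y (k - 1)) (\<gamma>t k - \<gamma> (k - 1)) + \<eta> (k - 1)"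
proof -
  have reg: "-1 < \<tau>" "\<tau> < 1 - \<sigma>t" "\<tau> + \<theta> > 0"
    using region unfolding region_R_def by auto
  have s0: "\<tau> + \<theta> > 0" using reg by simp
  have t1: "1 + \<tau> > 0" using reg by simp
  have tl1: "\<tau> < 1" using reg \<sigma>t by simp
  have a1: "1 - \<tau> - \<sigma>t > 0" using reg by simp
  have al: "2 - \<tau> - \<theta> - \<sigma>t > 0" using alpha_pos[OF region \<sigma>t] .
  have vt: "vartheta \<sigma>t \<tau> \<theta> > 0" using vartheta_pos[OF region \<sigma>t] .
  have Gs: "transpose G = G" and Gp: "\<And>x. qnorm2 G x \<ge> 0"
    and Ginv: "\<And>v. G *v (matrix_inv G *v v) = v" using pd_facts[OF G] by auto
  have Hs: "transpose H = H" and Hp: "\<And>x. qnorm2 H x \<ge> 0" using psd_facts[OF H] by auto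
  have fnm: "\<And>x. f x \<noteq> -\<infinity>" using f_pcc(1) unfolding proper_fun_def by auto
  have gnm: "\<And>x. g x \<noteq> -\<infinity>" using g_pcc(1) unfolding proper_fun_def by auto
  obtain w0 where gw0: "g w0 < \<infinity>" using g_pcc(1) unfolding proper_fun_def by auto
  have b0: "\<beta> \<ge> 0" using \<beta>_pos by simp
  define r where "r j = A *v xt j + B *v y j - b" for j
  define rp where "rp j = A *v xt j + B *v y (j - 1) - b" for j
  define dy where "dy j = y j - y (j - 1)" for j
  define wv where "wv j = B *v dy j" for j
  define h where "h j = \<gamma> (j - 1) - (\<tau> * \<beta>) *\<^sub>R rp j" for j
  have rp_eq: "rp j = r j - wv j" for j
    unfolding rp_def r_def wv_def dy_def by (simp add: matrix_vector_mult_diff_distrib algebra_simps)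
  have gt_eq: "\<gamma>t j - \<gamma> (j - 1) = (-\<beta>) *\<^sub>R (r j - wv j)" if "j \<ge> 1" for j
    using gt_def[OF that] rp_eq[of j] unfolding rp_def by simp
  have g_eq: "\<gamma> j = h j - (\<theta> * \<beta>) *\<^sub>R r j" if "j \<ge> 1" for j
    using g_upd[OF that] unfolding h_def rp_def r_def by simp
  have gtg_eq: "\<gamma>t j - \<gamma> j = ((\<tau> - 1) * \<beta>) *\<^sub>R (r j - wv j) + (\<theta> * \<beta>) *\<^sub>R r j" if "j \<ge> 1" for j
  proof -
    have "\<gamma>t j - \<gamma> j = (\<gamma>t j - \<gamma> (j - 1)) + (\<tau> * \<beta>) *\<^sub>R rp j + (\<theta> * \<beta>) *\<^sub>R r j"
      using g_eq[OF that] unfolding h_def by (simp add: algebra_simps)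
    also have "\<dots> = ((\<tau> - 1) * \<beta>) *\<^sub>R (r j - wv j) + (\<theta> * \<beta>) *\<^sub>R r j"
      unfolding gt_eq[OF that] rp_eq by (simp add: algebra_simps)
    finally show ?thesis .
  qed
  have x_eq: "xt j - x j = xt j - x (j - 1) + matrix_inv G *v u j" if "j \<ge> 1" for j
    using x_upd[OF that] by simp
  have gfin: "g (y j) < \<infinity>" if "j \<ge> 1" for j
  proof (rule ccontr)
    assume "\<not> ?thesis"
    then have "g (y j) = \<infinity>" by simp
    then show False using y_opt[OF that, of w0] gw0 by simp
  qed
  have sub: "g w \<ge> g (y j) + ereal ((h j - \<beta> *\<^sub>R r j) \<bullet> (B *v (w - y j)) - (H *v dy j) \<bullet> (w - y j))"
    if "j \<ge> 1" for j w
  proof -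
    have "g w \<ge> g (y j) + ereal (((\<gamma> (j - 1) - (\<tau> * \<beta>) *\<^sub>R (A *v xt j + B *v y (j - 1) - b))
           - \<beta> *\<^sub>R (A *v xt j + B *v y j - b)) \<bullet> (B *v (w - y j)) - (H *v (y j - y (j - 1))) \<bullet> (w - y j))"
      by (rule subgrad_from_min[OF g_pcc(2) gnm gfin[OF that] H b0]) (rule y_opt[OF that])
    then show ?thesis unfolding h_def rp_def r_def dy_def .
  qed
  have red: "\<sigma>' * Mnorm2 G H B \<beta> \<tau> \<theta> (xt j - x (j - 1)) (y j - y (j - 1)) (\<gamma>t j - \<gamma> (j - 1))
      - Mnorm2 G H B \<beta> \<tau> \<theta> (xt j - x j) 0 (\<gamma>t j - \<gamma> j)
      \<ge> (\<beta> / (\<tau> + \<theta>)) * (phi_tilde \<sigma>t \<tau> \<theta> \<sigma>' * (r j \<bullet> r j) - 2 * phi \<sigma>t \<tau> \<theta> \<sigma>' * (r j \<bullet> wv j)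
          + phi_hat \<sigma>t \<tau> \<theta> \<sigma>' * (wv j \<bullet> wv j)) + \<sigma>' * qnorm2 H (dy j)"
    if j1: "j \<ge> 1" and sg: "\<sigma>' \<ge> \<sigma>h" for j \<sigma>'
  proof -
    have m1: "Mnorm2 G H B \<beta> \<tau> \<theta> (xt j - x (j - 1)) (y j - y (j - 1)) (\<gamma>t j - \<gamma> (j - 1))
       = qnorm2 G (xt j - x (j - 1)) + qnorm2 H (dy j) + Mm \<beta> \<tau> \<theta> (wv j) ((-\<beta>) *\<^sub>R (r j - wv j))"
      unfolding Mn_Mm gt_eq[OF j1] wv_def dy_def ..
    have m0: "Mnorm2 G H B \<beta> \<tau> \<theta> (xt j - x j) 0 (\<gamma>t j - \<gamma> j)
       = qnorm2 G (xt j - x j) + Mm \<beta> \<tau> \<theta> 0 (((\<tau> - 1) * \<beta>) *\<^sub>R (r j - wv j) + (\<theta> * \<beta>) *\<^sub>R r j)"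
      unfolding Mn_Mm gtg_eq[OF j1] by simp
    have xe: "qnorm2 G (xt j - x j) \<le> (\<sigma>t / \<beta>) * (norm ((-\<beta>) *\<^sub>R (r j - wv j)))\<^sup>2 + \<sigma>h * qnorm2 G (xt j - x (j - 1))"
      using x_err[OF j1] unfolding x_eq[OF j1, symmetric] gt_eq[OF j1] .
    have rv: "\<sigma>' * Mm \<beta> \<tau> \<theta> (wv j) ((-\<beta>) *\<^sub>R (r j - wv j)) - (\<sigma>t / \<beta>) * (norm ((-\<beta>) *\<^sub>R (r j - wv j)))\<^sup>2
          - Mm \<beta> \<tau> \<theta> 0 (((\<tau> - 1) * \<beta>) *\<^sub>R (r j - wv j) + (\<theta> * \<beta>) *\<^sub>R r j)
        = (\<beta> / (\<tau> + \<theta>)) * (phi_tilde \<sigma>t \<tau> \<theta> \<sigma>' * (r j \<bullet> r j) - 2 * phi \<sigma>t \<tau> \<theta> \<sigma>' * (r j \<bullet> wv j)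
            + phi_hat \<sigma>t \<tau> \<theta> \<sigma>' * (wv j \<bullet> wv j))"
      by (rule red_vec[OF s0 \<beta>_pos])
    have gg: "\<sigma>h * qnorm2 G (xt j - x (j - 1)) \<le> \<sigma>' * qnorm2 G (xt j - x (j - 1))"
      using sg Gp by (intro mult_right_mono) auto
    have dd: "\<sigma>' * Mnorm2 G H B \<beta> \<tau> \<theta> (xt j - x (j - 1)) (y j - y (j - 1)) (\<gamma>t j - \<gamma> (j - 1))
       = \<sigma>' * qnorm2 G (xt j - x (j - 1)) + \<sigma>' * qnorm2 H (dy j) + \<sigma>' * Mm \<beta> \<tau> \<theta> (wv j) ((-\<beta>) *\<^sub>R (r j - wv j))"
      unfolding m1 by (simp add: algebra_simps)
    show ?thesis unfolding dd m0 using xe rv gg by linarith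
  qed
  show ?thesis
  proof (cases "k = 1")
    case True
    have kk: "k = 1" using True .
    define vth where "vth = vartheta \<sigma>t \<tau> \<theta>"
    define lam where "lam = 2 * (1 + \<tau> + vartheta \<sigma>t \<tau> \<theta>) / vartheta \<sigma>t \<tau> \<theta>"
    define K where "K = 4 * (1 + \<tau> + vartheta \<sigma>t \<tau> \<theta>) / vartheta \<sigma>t \<tau> \<theta>"
    have Klam: "K = 2 * lam" unfolding K_def lam_def by simp
    have lam2: "lam = 2 * (1 + \<tau>) / vartheta \<sigma>t \<tau> \<theta> + 2" unfolding lam_def using vt by (simp add: field_simps)
    have lam1: "lam \<ge> 1" unfolding lam2 using vt t1 by simp
    have lam0: "lam > 0" using lam1 by simp
    have Kpos: "K > 0" using Klam lam0 by simp
    have dy1: "dy 1 = y 1 - y 0" unfolding dy_def by simp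
    have wv1: "wv 1 = B *v (y 1 - y 0)" unfolding wv_def dy1 ..
    have gfin1: "g (y 1) < \<infinity>" using gfin[of 1] by simp
    define T where "T = 2 * (1 + \<tau>) * \<beta> * (r 1 \<bullet> wv 1) + qnorm2 H (dy 1)"
    have L1: "T \<le> K * Mnorm2 G H B \<beta> \<tau> \<theta> (xs - x 0) (ys - y 0) (gs - \<gamma> 0)"
      if kkt: "(xs, ys, gs) \<in> KKT_set f g A B b" for xs ys gs
    proof -
      have fA: "transpose A *v gs \<in> subdiff f xs" and gB: "transpose B *v gs \<in> subdiff g ys"
        and feas: "A *v xs + B *v ys - b = 0" using kkt unfolding KKT_set_def by auto
      define a where "a = A *v (xt 1 - xs)"
      define bb where "bb = B *v (y 1 - ys)"
      define c0 where "c0 = B *v (y 0 - ys)"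
      define g0 where "g0 = \<gamma> 0 - gs"
      define Ug where "Ug = matrix_inv G *v u 1"
      have r1: "r 1 = a + bb"
      proof -
        have "r 1 = (A *v xt 1 + B *v y 1 - b) - (A *v xs + B *v ys - b)" using feas unfolding r_def by simp
        then show ?thesis unfolding a_def bb_def by (simp add: matrix_vector_mult_diff_distrib algebra_simps)
      qed
      have rp1: "rp 1 = a + c0"
      proof -
        have "rp 1 = (A *v xt 1 + B *v y 0 - b) - (A *v xs + B *v ys - b)" using feas unfolding rp_def by simp
        then show ?thesis unfolding a_def c0_def by (simp add: matrix_vector_mult_diff_distrib algebra_simps)
      qed
      have w1: "wv 1 = bb - c0" unfolding wv1 bb_def c0_def by (simp add: matrix_vector_mult_diff_distrib)
      have x1: "x 1 = x 0 - Ug" using x_upd[of 1] unfolding Ug_def by simp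
      have gt1: "\<gamma>t 1 = \<gamma> 0 - \<beta> *\<^sub>R (a + c0)" using gt_def[of 1] rp1 unfolding rp_def by simp
      have h1: "h 1 = \<gamma> 0 - (\<tau> * \<beta>) *\<^sub>R (a + c0)" unfolding h_def using rp1 by simp
      have g1: "\<gamma> 1 = \<gamma> 0 - (\<tau> * \<beta>) *\<^sub>R (a + c0) - (\<theta> * \<beta>) *\<^sub>R (a + bb)" using g_eq[of 1] h1 r1 by simp
      have MF: "(G *v Ug) \<bullet> (xt 1 - xs) + (g0 - \<beta> *\<^sub>R (a + c0)) \<bullet> a \<ge> 0"
      proof -
        have us: "u 1 + transpose A *v \<gamma>t 1 \<in> subdiff f (xt 1)" using u_sub[of 1] by simp
        have i1: "f xs \<ge> f (xt 1) + ereal ((u 1 + transpose A *v \<gamma>t 1) \<bullet> (xs - xt 1))" and fin1: "f (xt 1) < \<infinity>"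
          using us unfolding subdiff_def by auto
        have i2: "f (xt 1) \<ge> f xs + ereal ((transpose A *v gs) \<bullet> (xt 1 - xs))" and fin2: "f xs < \<infinity>"
          using fA unfolding subdiff_def by auto
        have m: "(u 1 + transpose A *v \<gamma>t 1) \<bullet> (xs - xt 1) + (transpose A *v gs) \<bullet> (xt 1 - xs) \<le> 0"
          by (rule ereal_two_ineq[of f "xt 1" xs, OF fnm fnm fin1 fin2 i1 i2])
        have uG: "u 1 = G *v Ug" unfolding Ug_def using Ginv by simp
        have gg: "g0 - \<beta> *\<^sub>R (a + c0) = \<gamma>t 1 - gs" unfolding g0_def gt1 by simp
        have "(u 1 + transpose A *v \<gamma>t 1) \<bullet> (xs - xt 1) + (transpose A *v gs) \<bullet> (xt 1 - xs)
              = - ((G *v Ug) \<bullet> (xt 1 - xs) + (\<gamma>t 1 - gs) \<bullet> (A *v (xt 1 - xs)))"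
          unfolding uG by (simp add: inner_add_left inner_diff_right inner_diff_left dot_lmul_matrix
              matrix_vector_mult_diff_distrib)
        then show ?thesis using m unfolding gg by (simp add: a_def)
      qed
      have MG: "(g0 - (\<tau> * \<beta>) *\<^sub>R (a + c0) - \<beta> *\<^sub>R (a + bb)) \<bullet> bb - (H *v dy 1) \<bullet> (y 1 - ys) \<ge> 0"
      proof -
        have i1: "g ys \<ge> g (y 1) + ereal ((h 1 - \<beta> *\<^sub>R r 1) \<bullet> (B *v (ys - y 1)) - (H *v dy 1) \<bullet> (ys - y 1))"
          using sub[of 1 ys] by simp
        have i2: "g (y 1) \<ge> g ys + ereal ((transpose B *v gs) \<bullet> (y 1 - ys))" and fin2: "g ys < \<infinity>"
          using gB unfolding subdiff_def by auto
        have m: "(h 1 - \<beta> *\<^sub>R r 1) \<bullet> (B *v (ys - y 1)) - (H *v dy 1) \<bullet> (ys - y 1) + (transpose B *v gs) \<bullet> (y 1 - ys) \<le> 0"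
          by (rule ereal_two_ineq[of g "y 1" ys, OF gnm gnm gfin1 fin2 i1 i2])
        have hh: "g0 - (\<tau> * \<beta>) *\<^sub>R (a + c0) - \<beta> *\<^sub>R (a + bb) = (h 1 - \<beta> *\<^sub>R r 1) - gs"
          unfolding g0_def h1 r1 by (simp add: algebra_simps)
        have "(h 1 - \<beta> *\<^sub>R r 1) \<bullet> (B *v (ys - y 1)) - (H *v dy 1) \<bullet> (ys - y 1) + (transpose B *v gs) \<bullet> (y 1 - ys)
           = - (((h 1 - \<beta> *\<^sub>R r 1) - gs) \<bullet> bb - (H *v dy 1) \<bullet> (y 1 - ys))"
          unfolding bb_def by (simp add: inner_diff_left inner_diff_right matrix_vector_mult_diff_distrib dot_lmul_matrix)
        then show ?thesis using m unfolding hh by simp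
      qed
      have FG: "qnorm2 G (xs - x 0) - qnorm2 G (xs - x 1) - qnorm2 G (xt 1 - x 0) + qnorm2 G (xt 1 - x 1)
          = 2 * ((G *v Ug) \<bullet> (xt 1 - xs))"
      proof -
        have e1: "xs - x 1 = (xs - x 0) + Ug" using x1 by simp
        have e2: "xt 1 - x 1 = (xt 1 - x 0) + Ug" using x1 by simp
        have s1: "(G *v (xs - x 0)) \<bullet> Ug = (G *v Ug) \<bullet> (xs - x 0)" by (rule sym_inner[OF Gs])
        have s2: "(G *v (xt 1 - x 0)) \<bullet> Ug = (G *v Ug) \<bullet> (xt 1 - x 0)" by (rule sym_inner[OF Gs])
        show ?thesis unfolding e1 e2 qnorm2_add[OF Gs] s1 s2 by (simp add: inner_diff_right algebra_simps)
      qed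
      have FH: "qnorm2 H (ys - y 0) - qnorm2 H (ys - y 1) - qnorm2 H (dy 1) + qnorm2 H 0
          = -2 * ((H *v dy 1) \<bullet> (y 1 - ys))"
      proof -
        have e1: "ys - y 0 = (ys - y 1) + dy 1" unfolding dy_def by simp
        have s1: "(H *v (ys - y 1)) \<bullet> dy 1 = (H *v dy 1) \<bullet> (ys - y 1)" by (rule sym_inner[OF Hs])
        have e2: "(H *v dy 1) \<bullet> (ys - y 1) = - ((H *v dy 1) \<bullet> (y 1 - ys))" by (simp add: inner_diff_right)
        show ?thesis unfolding e1 qnorm2_add[OF Hs] s1 e2 by simp
      qed
      have q1: "B *v (ys - y 0) = - c0" unfolding c0_def by (simp add: matrix_vector_mult_diff_distrib)
      have FM: "Mm \<beta> \<tau> \<theta> (B *v (ys - y 0)) (gs - \<gamma> 0) - Mm \<beta> \<tau> \<theta> (B *v (ys - y 1)) (gs - \<gamma> 1)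
          - Mm \<beta> \<tau> \<theta> (wv 1) (\<gamma>t 1 - \<gamma> 0) + Mm \<beta> \<tau> \<theta> (B *v 0) (\<gamma>t 1 - \<gamma> 1)
          = 2 * ((g0 - \<beta> *\<^sub>R (a + c0)) \<bullet> a) + 2 * ((g0 - (\<tau> * \<beta>) *\<^sub>R (a + c0) - \<beta> *\<^sub>R (a + bb)) \<bullet> bb)"
      proof -
        have q2: "gs - \<gamma> 0 = - g0" unfolding g0_def by simp
        have q3: "B *v (ys - y 1) = - bb" unfolding bb_def by (simp add: matrix_vector_mult_diff_distrib)
        have q4: "gs - \<gamma> 1 = - (g0 - (\<tau> * \<beta>) *\<^sub>R (a + c0) - (\<theta> * \<beta>) *\<^sub>R (a + bb))"
          unfolding g0_def g1 by (simp add: algebra_simps)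
        have q6: "\<gamma>t 1 - \<gamma> 0 = -\<beta> *\<^sub>R (a + c0)" unfolding gt1 by simp
        have q7: "B *v 0 = (0::real^'m)" by simp
        have q8: "\<gamma>t 1 - \<gamma> 1 = ((\<tau> - 1) * \<beta>) *\<^sub>R (a + c0) + (\<theta> * \<beta>) *\<^sub>R (a + bb)"
          unfolding gt1 g1 by (simp add: algebra_simps)
        show ?thesis unfolding q1 q2 q3 q4 w1 q6 q7 q8 by (rule m_fejer[OF s0 \<beta>_pos])
      qed
      define d where "d = Mnorm2 G H B \<beta> \<tau> \<theta> (xs - x 0) (ys - y 0) (gs - \<gamma> 0)"
      define P where "P = Mnorm2 G H B \<beta> \<tau> \<theta> (xs - x 1) (ys - y 1) (gs - \<gamma> 1)"
      define D1 where "D1 = Mnorm2 G H B \<beta> \<tau> \<theta> (xt 1 - x 0) (y 1 - y 0) (\<gamma>t 1 - \<gamma> 0)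
          - Mnorm2 G H B \<beta> \<tau> \<theta> (xt 1 - x 1) 0 (\<gamma>t 1 - \<gamma> 1)"
      have F1: "d - P - D1 \<ge> 0"
      proof -
        have dM: "d = qnorm2 G (xs - x 0) + qnorm2 H (ys - y 0) + Mm \<beta> \<tau> \<theta> (B *v (ys - y 0)) (gs - \<gamma> 0)"
          unfolding d_def Mn_Mm ..
        have PM: "P = qnorm2 G (xs - x 1) + qnorm2 H (ys - y 1) + Mm \<beta> \<tau> \<theta> (B *v (ys - y 1)) (gs - \<gamma> 1)"
          unfolding P_def Mn_Mm ..
        have DM: "D1 = (qnorm2 G (xt 1 - x 0) + qnorm2 H (dy 1) + Mm \<beta> \<tau> \<theta> (wv 1) (\<gamma>t 1 - \<gamma> 0))
           - (qnorm2 G (xt 1 - x 1) + qnorm2 H 0 + Mm \<beta> \<tau> \<theta> (B *v 0) (\<gamma>t 1 - \<gamma> 1))"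
          unfolding D1_def Mn_Mm dy1 wv1 ..
        show ?thesis using dM PM DM FG FH FM MF MG by linarith
      qed
      define Qp where "Qp = (2 - \<tau> - \<theta> - \<sigma>t) * (r 1 \<bullet> r 1) - 2 * (1 - \<tau> - \<sigma>t) * (r 1 \<bullet> wv 1) + (1 - \<tau> - \<sigma>t) * (wv 1 \<bullet> wv 1)"
      have F2: "D1 \<ge> \<beta> * Qp + qnorm2 H (dy 1)"
        using red[of 1 1] \<sigma>h phi_one[OF s0, of \<beta> \<sigma>t "r 1 \<bullet> r 1" "r 1 \<bullet> wv 1" "wv 1 \<bullet> wv 1"]
        unfolding D1_def Qp_def by simp
      define q0 where "q0 = B *v (ys - y 0)"
      define p0 where "p0 = (gs - \<gamma> 0) - (\<tau> * \<beta>) *\<^sub>R q0"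
      define dpq where "dpq = (1 - \<tau>) * \<beta> * (q0 \<bullet> q0) + (1 / ((\<tau> + \<theta>) * \<beta>)) * (p0 \<bullet> p0)"
      define Ppq where "Ppq = (1 - \<tau>) * \<beta> * ((q0 - wv 1) \<bullet> (q0 - wv 1))
               + (1 / ((\<tau> + \<theta>) * \<beta>)) * ((p0 + ((\<tau> + \<theta>) * \<beta>) *\<^sub>R r 1) \<bullet> (p0 + ((\<tau> + \<theta>) * \<beta>) *\<^sub>R r 1))"
      have dD: "d = (qnorm2 G (xs - x 0) + qnorm2 H (ys - y 0)) + dpq"
        unfolding d_def Mn_decomp[OF s0 \<beta>_pos] dpq_def p0_def q0_def by simp
      have q1e: "B *v (ys - y 1) = q0 - wv 1" unfolding q0_def wv1 by (simp add: matrix_vector_mult_diff_distrib)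
      have p1e: "(gs - \<gamma> 1) - (\<tau> * \<beta>) *\<^sub>R (q0 - wv 1) = p0 + ((\<tau> + \<theta>) * \<beta>) *\<^sub>R r 1"
        unfolding p0_def q0_def q1 g1 r1 w1 by (simp add: algebra_simps)
      have PD: "P = (qnorm2 G (xs - x 1) + qnorm2 H (ys - y 1)) + Ppq"
        unfolding P_def Mn_decomp[OF s0 \<beta>_pos] Ppq_def q1e p1e by simp
      have A1: "4 - \<tau> - \<theta> - 2 * \<sigma>t > 0" using al \<sigma>t s0 by simp
      have X1: "3 - 3 * \<tau> - 2 * \<sigma>t \<ge> 0" using a1 \<sigma>t by simp
      have hyp: "(1 + \<tau> + lam * (1 - \<tau> - \<sigma>t))^2
              \<le> (lam * ((4 - \<tau> - \<theta> - 2 * \<sigma>t) / 2)) * (lam * ((3 - 3 * \<tau> - 2 * \<sigma>t) / 2))"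
        using lam_hyp[OF vt t1 a1 X1 less_imp_le[OF A1]] unfolding lam_def .
      have pq: "0 \<le> lam * dpq + lam * Ppq + lam * \<beta> * Qp - 2 * (1 + \<tau>) * \<beta> * (r 1 \<bullet> wv 1)"
        using pq_bound[OF s0 \<beta>_pos tl1 lam0 A1 hyp, where pp=p0 and qq=q0 and r="r 1" and w="wv 1"]
        unfolding dpq_def Ppq_def Qp_def by simp
      have "2 * (1 + \<tau>) * \<beta> * (r 1 \<bullet> wv 1) + qnorm2 H (dy 1) \<le> (2 * lam) * d"
        by (rule combine[OF lam1 F1 F2 pq dD PD]) (simp_all add: Gp Hp)
      then show ?thesis unfolding T_def Klam d_def .
    qed
    define d0v where "d0v = d0 f g A B b G H \<beta> \<tau> \<theta> (x 0) (y 0) (\<gamma> 0)"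
    have d0b: "T / K \<le> d0v"
      unfolding d0v_def d0_def
    proof (rule cInf_greatest)
      show "(\<lambda>(xs, ys, \<gamma>s). Mnorm2 G H B \<beta> \<tau> \<theta> (xs - x 0) (ys - y 0) (\<gamma>s - \<gamma> 0)) ` KKT_set f g A B b \<noteq> {}"
        using KKT_ne by simp
    next
      fix m assume "m \<in> (\<lambda>(xs, ys, \<gamma>s). Mnorm2 G H B \<beta> \<tau> \<theta> (xs - x 0) (ys - y 0) (\<gamma>s - \<gamma> 0)) ` KKT_set f g A B b"
      then obtain xs ys gs where kk: "(xs, ys, gs) \<in> KKT_set f g A B b"
        and m: "m = Mnorm2 G H B \<beta> \<tau> \<theta> (xs - x 0) (ys - y 0) (gs - \<gamma> 0)" by auto
      show "T / K \<le> m" unfolding m using L1[OF kk] Kpos by (simp add: pos_divide_le_eq mult.commute)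
    qed
    have Td: "T \<le> K * d0v" using d0b Kpos by (simp add: pos_divide_le_eq mult.commute)
    have cf: "4 * (1 + \<tau> + vartheta \<sigma>t \<tau> \<theta>) * phi \<sigma>t \<tau> \<theta> \<sigma> / ((\<tau> + \<theta>) * (1 + \<tau>) * vartheta \<sigma>t \<tau> \<theta>)
        = (phi \<sigma>t \<tau> \<theta> \<sigma> / ((\<tau> + \<theta>) * (1 + \<tau>))) * K" unfolding K_def by simp
    have cf0: "phi \<sigma>t \<tau> \<theta> \<sigma> / ((\<tau> + \<theta>) * (1 + \<tau>)) \<ge> 0" using \<sigma>_phi(1) s0 t1 by simp
    have E: "4 * (1 + \<tau> + vartheta \<sigma>t \<tau> \<theta>) * phi \<sigma>t \<tau> \<theta> \<sigma> / ((\<tau> + \<theta>) * (1 + \<tau>) * vartheta \<sigma>t \<tau> \<theta>) * d0v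
        \<ge> phi \<sigma>t \<tau> \<theta> \<sigma> / ((\<tau> + \<theta>) * (1 + \<tau>)) * (2 * (1 + \<tau>) * \<beta> * (r 1 \<bullet> wv 1) + qnorm2 H (dy 1))"
      unfolding cf T_def[symmetric] using mult_left_mono[OF Td cf0] by (simp add: mult.assoc)
    have sg0: "\<sigma> \<ge> 0" using \<sigma> \<sigma>h by simp
    have red1: "\<sigma> * Mnorm2 G H B \<beta> \<tau> \<theta> (xt 1 - x (1 - 1)) (y 1 - y (1 - 1)) (\<gamma>t 1 - \<gamma> (1 - 1))
      - Mnorm2 G H B \<beta> \<tau> \<theta> (xt 1 - x 1) 0 (\<gamma>t 1 - \<gamma> 1)
      \<ge> (\<beta> / (\<tau> + \<theta>)) * (phi_tilde \<sigma>t \<tau> \<theta> \<sigma> * (r 1 \<bullet> r 1) - 2 * phi \<sigma>t \<tau> \<theta> \<sigma> * (r 1 \<bullet> wv 1)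
          + phi_hat \<sigma>t \<tau> \<theta> \<sigma> * (wv 1 \<bullet> wv 1)) + \<sigma> * qnorm2 H (dy 1)"
      using red[of 1 \<sigma>] \<sigma>(1) by simp
    have fin: "0 \<le> (\<sigma> * Mnorm2 G H B \<beta> \<tau> \<theta> (xt 1 - x (1 - 1)) (y 1 - y (1 - 1)) (\<gamma>t 1 - \<gamma> (1 - 1))
      - Mnorm2 G H B \<beta> \<tau> \<theta> (xt 1 - x 1) 0 (\<gamma>t 1 - \<gamma> 1))
      + 4 * (1 + \<tau> + vartheta \<sigma>t \<tau> \<theta>) * phi \<sigma>t \<tau> \<theta> \<sigma> / ((\<tau> + \<theta>) * (1 + \<tau>) * vartheta \<sigma>t \<tau> \<theta>) * d0v
      - (phi_tilde \<sigma>t \<tau> \<theta> \<sigma> / ((\<tau> + \<theta>) * \<beta>) * (\<beta>^2 * (r 1 \<bullet> r 1)) + phi \<sigma>t \<tau> \<theta> \<sigma> / ((\<tau> + \<theta>) * (1 + \<tau>)) * qnorm2 H (dy 1))"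
      by (rule final_k1[OF s0 \<beta>_pos t1 \<sigma>_phi(2) sg0 red1 E]) (simp_all add: Hp)
    have nk: "(norm (- \<beta> *\<^sub>R (A *v xt i + B *v y i - b)))\<^sup>2 = \<beta>^2 * (r i \<bullet> r i)" for i
      unfolding r_def by (simp add: power_mult_distrib power2_norm_eq_inner[symmetric])
    show ?thesis unfolding Let_def kk using fin nk unfolding dy_def d0v_def by (simp del: nk)
  next
    case False
    then obtain j where kj: "k = Suc j" and j1: "j \<ge> 1" using k by (cases k) auto
    have k1: "k \<ge> 1" using k .
    have kj1: "k - 1 = j" using kj by simp
    have i1: "g (y j) \<ge> g (y k) + ereal ((h k - \<beta> *\<^sub>R r k) \<bullet> (B *v (y j - y k)) - (H *v dy k) \<bullet> (y j - y k))"
      using sub[OF k1, of "y j"] .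
    have i2: "g (y k) \<ge> g (y j) + ereal ((h j - \<beta> *\<^sub>R r j) \<bullet> (B *v (y k - y j)) - (H *v dy j) \<bullet> (y k - y j))"
      using sub[OF j1, of "y k"] .
    have mono: "(h k - \<beta> *\<^sub>R r k) \<bullet> (B *v (y j - y k)) - (H *v dy k) \<bullet> (y j - y k)
        + ((h j - \<beta> *\<^sub>R r j) \<bullet> (B *v (y k - y j)) - (H *v dy j) \<bullet> (y k - y j)) \<le> 0"
      by (rule ereal_two_ineq[of g "y k" "y j", OF gnm[of "y k"] gnm[of "y j"] gfin[OF k1] gfin[OF j1] i1 i2])
    have e1: "y k - y j = dy k" unfolding dy_def kj1 ..
    have e2: "y j - y k = - dy k" unfolding dy_def kj1 by simp
    have e3: "B *v (y j - y k) = - wv k" unfolding e2 wv_def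
      by (metis diff_0 matrix_vector_mult_0_right matrix_vector_mult_diff_distrib)
    have e4: "B *v (y k - y j) = wv k" unfolding e1 wv_def ..
    have vec: "(h k - \<beta> *\<^sub>R r k) - (h j - \<beta> *\<^sub>R r j)
        = (-(\<tau> * \<beta>)) *\<^sub>R (r k - wv k) - \<beta> *\<^sub>R r k + ((1 - \<theta>) * \<beta>) *\<^sub>R r j"
    proof -
      have "h k = \<gamma> j - (\<tau> * \<beta>) *\<^sub>R (r k - wv k)" unfolding h_def kj1 rp_eq ..
      then show ?thesis using g_eq[OF j1] by (simp add: algebra_simps)
    qed
    have Mk: "\<beta> * (- (1 + \<tau>) * (r k \<bullet> wv k) + \<tau> * (wv k \<bullet> wv k) + (1 - \<theta>) * (r j \<bullet> wv k))
        - qnorm2 H (dy k) + (H *v dy j) \<bullet> dy k \<ge> 0"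
    proof -
      have e5: "(H *v dy k) \<bullet> (y j - y k) = - qnorm2 H (dy k)" unfolding e2 qnorm2_def by simp
      have e6: "(H *v dy j) \<bullet> (y k - y j) = (H *v dy j) \<bullet> dy k" unfolding e1 ..
      have "((h k - \<beta> *\<^sub>R r k) - (h j - \<beta> *\<^sub>R r j)) \<bullet> wv k - qnorm2 H (dy k) + (H *v dy j) \<bullet> dy k \<ge> 0"
        using mono unfolding e3 e4 e5 e6 by (simp add: inner_diff_left)
      then show ?thesis unfolding vec
        by (simp add: inner_diff_left inner_add_left inner_diff_right algebra_simps)
    qed
    have H3: "qnorm2 H (dy k) - 2 * ((H *v dy j) \<bullet> dy k) + qnorm2 H (dy j) \<ge> 0"
      using Hp[of "dy k - dy j"] unfolding qnorm2_diff[OF Hs] sym_inner[OF Hs, of "dy k" "dy j"] .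
    define c where "c = phi \<sigma>t \<tau> \<theta> \<sigma> * (1 - \<theta>) / (1 + \<tau>)"
    define ft where "ft = phi_tilde \<sigma>t \<tau> \<theta> \<sigma>"
    have C4: "ft^2 * (r j \<bullet> r j) - 2 * ft * c * (r j \<bullet> wv k) + c^2 * (wv k \<bullet> wv k) \<ge> 0"
    proof -
      have "0 \<le> (ft *\<^sub>R r j - c *\<^sub>R wv k) \<bullet> (ft *\<^sub>R r j - c *\<^sub>R wv k)" by simp
      then show ?thesis by (simp add: inner_diff_left inner_diff_right inner_commute power2_eq_square algebra_simps)
    qed
    have redk: "\<sigma> * Mnorm2 G H B \<beta> \<tau> \<theta> (xt k - x (k - 1)) (y k - y (k - 1)) (\<gamma>t k - \<gamma> (k - 1))
      - Mnorm2 G H B \<beta> \<tau> \<theta> (xt k - x k) 0 (\<gamma>t k - \<gamma> k)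
      \<ge> (\<beta> / (\<tau> + \<theta>)) * (phi_tilde \<sigma>t \<tau> \<theta> \<sigma> * (r k \<bullet> r k) - 2 * phi \<sigma>t \<tau> \<theta> \<sigma> * (r k \<bullet> wv k)
          + phi_hat \<sigma>t \<tau> \<theta> \<sigma> * (wv k \<bullet> wv k)) + \<sigma> * qnorm2 H (dy k)"
      using red[OF k1 \<sigma>(1)] .
    have sg0: "\<sigma> \<ge> 0" using \<sigma> \<sigma>h by simp
    have fb: "((1 + \<tau>) * phi_hat \<sigma>t \<tau> \<theta> \<sigma> - 2 * \<tau> * phi \<sigma>t \<tau> \<theta> \<sigma>) * (1 + \<tau>) * phi_tilde \<sigma>t \<tau> \<theta> \<sigma>
        - (1 - \<theta>)\<^sup>2 * (phi \<sigma>t \<tau> \<theta> \<sigma>)\<^sup>2 \<ge> 0" using \<sigma>_phi(4) unfolding phi_bar_def .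
    have fin: "0 \<le> (\<sigma> * Mnorm2 G H B \<beta> \<tau> \<theta> (xt k - x (k - 1)) (y k - y (k - 1)) (\<gamma>t k - \<gamma> (k - 1))
      - Mnorm2 G H B \<beta> \<tau> \<theta> (xt k - x k) 0 (\<gamma>t k - \<gamma> k))
       + (phi_tilde \<sigma>t \<tau> \<theta> \<sigma> / ((\<tau> + \<theta>) * \<beta>) * (\<beta>^2 * (r j \<bullet> r j)) + phi \<sigma>t \<tau> \<theta> \<sigma> / ((\<tau> + \<theta>) * (1 + \<tau>)) * qnorm2 H (dy j))
       - (phi_tilde \<sigma>t \<tau> \<theta> \<sigma> / ((\<tau> + \<theta>) * \<beta>) * (\<beta>^2 * (r k \<bullet> r k)) + phi \<sigma>t \<tau> \<theta> \<sigma> / ((\<tau> + \<theta>) * (1 + \<tau>)) * qnorm2 H (dy k))"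
      by (rule final_k2[OF s0 \<beta>_pos t1 \<sigma>_phi(1) \<sigma>_phi(3) sg0 fb redk Mk H3 C4[unfolded c_def ft_def]])
         (simp_all add: Hp)
    have nk: "(norm (- \<beta> *\<^sub>R (A *v xt i + B *v y i - b)))\<^sup>2 = \<beta>^2 * (r i \<bullet> r i)" for i
      unfolding r_def by (simp add: power_mult_distrib power2_norm_eq_inner[symmetric])
    have kn0: "k \<noteq> 0" "k - 1 \<noteq> 0" using kj j1 by auto
    show ?thesis unfolding Let_def using fin kn0 nk unfolding dy_def kj1 by (simp del: nk)
  qed
qed

end
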